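(* Let $d\ge 1$, $T\ge 1$, let $\mathcal{X}\subseteq\mathbb{R}^d$ be a non-empty closed convex set containing $\mathbf{0}$, and let $0<\mu\le L$. Let $f_1,\dots,f_T:\mathcal{X}\to[0,\infty)$ be differentiable with $\frac{\mu}{2}\|y-x\|^2\le f_t(y)-f_t(x)-\langle\nabla f_t(x),y-x\rangle\le\frac{L}{2}\|y-x\|^2$ for all $t$ and $x,y\in\mathcal{X}$. With starting point $x_0=\mathbf{0}$, let $$C_{\mathsf{OPT}}=\min_{(x_1,\dots,x_T)\in\mathcal{X}^T}\sum_{t=1}^T\Big(f_t(x_t)+\frac12\|x_t-x_{t-1}\|^2\Big).$$ Then $$C_{\mathsf{OPT}}\ge\sum_{t=1}^T f_t(x_t^\star)+\frac{\mu}{2(\mu+4)}\big(\mathcal{P}_{2,T}^\star+\|x_1^\star\|^2\big).$$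
   Context: $x_t^\star=\arg\min_{x\in\mathcal{X}}f_t(x)$ and $\mathcal{P}_{2,T}^\star=\sum_{t=2}^T\|x_t^\star-x_{t-1}^\star\|^2$. *)

theory Defs
  imports "HOL-Analysis.Analysis"
begin

end

theory Submission
  imports Defs
begin

lemma cs3:
  fixes a b c k :: real
  assumes "k > 0"
  shows "(a+b+c)^2 \<le> (2+k) * (a^2 + b^2/k + c^2)"
proof -
  have "(2+k) * (a^2 + b^2/k + c^2) - (a+b+c)^2 = (a-c)^2 + (k*a - b)^2/k + (b - k*c)^2/k"
    using assms by (simp add: field_simps power2_eq_square)
  moreover have "(a-c)^2 + (k*a - b)^2/k + (b - k*c)^2/k \<ge> 0" using assms by simp
  ultimately show ?thesis by linarith
qed

lemma sc_min:
  fixes f :: "real ^ 'd \<Rightarrow> real" and g :: "real ^ 'd \<Rightarrow> real ^ 'd"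
  assumes cX: "convex X" and xm: "xm \<in> X" and y: "y \<in> X"
    and mn: "\<forall>z\<in>X. f xm \<le> f z"
    and sc: "\<And>x y. x \<in> X \<Longrightarrow> y \<in> X \<Longrightarrow> \<mu> / 2 * (norm (y - x))\<^sup>2 \<le> f y - f x - g x \<bullet> (y - x)"
    and mu: "\<mu> > 0"
  shows "\<mu> / 2 * (norm (y - xm))\<^sup>2 \<le> f y - f xm"
proof -
  define d where "d = y - xm"
  define D where "D = (norm d)^2"
  have step: "f y - f xm \<ge> \<mu>/2 * (1-s) * D" if s: "0 < s" "s < 1" for s
  proof -
    define z where "z = xm + s *\<^sub>R d"
    have zeq: "z = (1-s) *\<^sub>R xm + s *\<^sub>R y" unfolding z_def d_def by (simp add: algebra_simps)
    have zX: "z \<in> X" unfolding zeq using cX xm y s by (simp add: convex_def)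
    have A: "\<mu> / 2 * (norm (xm - z))\<^sup>2 \<le> f xm - f z - g z \<bullet> (xm - z)" using sc zX xm by blast
    have B: "\<mu> / 2 * (norm (y - z))\<^sup>2 \<le> f y - f z - g z \<bullet> (y - z)" using sc zX y by blast
    have e1: "xm - z = (-s) *\<^sub>R d" unfolding z_def by simp
    have e2: "y - z = (1-s) *\<^sub>R d" unfolding z_def d_def by (simp add: algebra_simps)
    have n1: "(norm (xm - z))\<^sup>2 = s^2 * D" unfolding e1 D_def by (simp add: power_mult_distrib)
    have n2: "(norm (y - z))\<^sup>2 = (1-s)^2 * D" unfolding e2 D_def using s by (simp add: power_mult_distrib)
    have i1: "g z \<bullet> (xm - z) = -s * (g z \<bullet> d)" unfolding e1 by simp
    have i2: "g z \<bullet> (y - z) = (1-s) * (g z \<bullet> d)" unfolding e2 by simp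
    have A': "\<mu> / 2 * (s^2 * D) \<le> f xm - f z + s * (g z \<bullet> d)" using A n1 i1 by simp
    have B': "\<mu> / 2 * ((1-s)^2 * D) \<le> f y - f z - (1-s) * (g z \<bullet> d)" using B n2 i2 by simp
    have C: "(1-s) * (\<mu> / 2 * (s^2 * D)) + s * (\<mu> / 2 * ((1-s)^2 * D))
        \<le> (1-s) * (f xm - f z + s * (g z \<bullet> d)) + s * (f y - f z - (1-s) * (g z \<bullet> d))"
      using mult_left_mono[OF A', of "1-s"] mult_left_mono[OF B', of s] s by linarith
    have fz: "f xm \<le> f z" using mn zX by blast
    have "s * (\<mu>/2 * (1-s) * D) = (1-s) * (\<mu> / 2 * (s^2 * D)) + s * (\<mu> / 2 * ((1-s)^2 * D))"
      by (simp add: field_simps power2_eq_square)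
    also have "\<dots> \<le> (1-s) * (f xm - f z + s * (g z \<bullet> d)) + s * (f y - f z - (1-s) * (g z \<bullet> d))" by (rule C)
    also have "\<dots> = (1-s) * f xm + s * f y - f z" by (simp add: algebra_simps)
    also have "\<dots> \<le> s * (f y - f xm)" using fz by (simp add: algebra_simps)
    finally have "s * (\<mu>/2 * (1-s) * D) \<le> s * (f y - f xm)" .
    then show ?thesis using s by simp
  qed
  have a0: "f y - f xm \<ge> 0" using mn y by auto
  show ?thesis
  proof (rule ccontr)
    assume "\<not> ?thesis"
    then have lt: "f y - f xm < \<mu>/2 * D" unfolding D_def d_def by simp
    define a where "a = f y - f xm"
    define b where "b = \<mu>/2 * D"
    have ab: "a < b" "0 \<le> a" using lt a0 unfolding a_def b_def by auto
    define s where "s = (b - a) / (2*b)"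
    have s: "0 < s" "s < 1" using ab unfolding s_def by (auto simp: field_simps)
    have "b * (1 - s) = (a + b)/2" unfolding s_def using ab by (simp add: field_simps)
    moreover have "a \<ge> b * (1-s)" using step[OF s] unfolding a_def b_def by (simp add: algebra_simps)
    ultimately have "(a+b)/2 \<le> a" by simp
    then show False using ab by simp
  qed
qed

theorem lemma5:
  fixes X :: "(real ^ 'd) set"
    and f :: "nat \<Rightarrow> real ^ 'd \<Rightarrow> real"
    and grad :: "nat \<Rightarrow> real ^ 'd \<Rightarrow> real ^ 'd"
    and xs :: "nat \<Rightarrow> real ^ 'd"
    and T :: nat and \<mu> L :: real
  assumes T: "T \<ge> 1"
    and X: "X \<noteq> {}" "closed X" "convex X" "0 \<in> X"
    and mu: "0 < \<mu>" "\<mu> \<le> L"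
    and nonneg: "\<And>t x. t \<in> {1..T} \<Longrightarrow> x \<in> X \<Longrightarrow> f t x \<ge> 0"
    and deriv: "\<And>t x. t \<in> {1..T} \<Longrightarrow> x \<in> X \<Longrightarrow>
                  (f t has_derivative (\<lambda>h. grad t x \<bullet> h)) (at x within X)"
    and sc: "\<And>t x y. t \<in> {1..T} \<Longrightarrow> x \<in> X \<Longrightarrow> y \<in> X \<Longrightarrow>
               \<mu> / 2 * (norm (y - x))\<^sup>2 \<le> f t y - f t x - grad t x \<bullet> (y - x)"
    and smooth: "\<And>t x y. t \<in> {1..T} \<Longrightarrow> x \<in> X \<Longrightarrow> y \<in> X \<Longrightarrow>
               f t y - f t x - grad t x \<bullet> (y - x) \<le> L / 2 * (norm (y - x))\<^sup>2"
    and xs_min: "\<And>t. t \<in> {1..T} \<Longrightarrow> xs t \<in> X \<and> (\<forall>y\<in>X. f t (xs t) \<le> f t y)"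
  shows "(INF x \<in> {x :: nat \<Rightarrow> real ^ 'd. x 0 = 0 \<and> (\<forall>t\<in>{1..T}. x t \<in> X)}.
            (\<Sum>t=1..T. f t (x t) + 1/2 * (norm (x t - x (t - 1)))\<^sup>2))
         \<ge> (\<Sum>t=1..T. f t (xs t))
           + \<mu> / (2 * (\<mu> + 4)) * ((\<Sum>t=2..T. (norm (xs t - xs (t - 1)))\<^sup>2) + (norm (xs 1))\<^sup>2)"
proof (rule cINF_greatest)
  show "{x :: nat \<Rightarrow> real ^ 'd. x 0 = 0 \<and> (\<forall>t\<in>{1..T}. x t \<in> X)} \<noteq> {}"
    using X(4) by (auto intro!: exI[of _ "\<lambda>_. 0"])
next
  fix x :: "nat \<Rightarrow> real ^ 'd"
  assume "x \<in> {x :: nat \<Rightarrow> real ^ 'd. x 0 = 0 \<and> (\<forall>t\<in>{1..T}. x t \<in> X)}"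
  then have x0: "x 0 = 0" and xX: "\<And>t. t \<in> {1..T} \<Longrightarrow> x t \<in> X" by auto
  define y where "y t = (if t = 0 then 0 else xs t)" for t
  define e where "e t = norm (x t - y t)" for t
  define m where "m t = norm (x t - x (t - 1))" for t
  define k where "k = \<mu> / 2"
  have k: "k > 0" using mu unfolding k_def by simp
  have e0: "e 0 = 0" unfolding e_def y_def x0 by simp
  have fb: "f t (x t) - f t (xs t) \<ge> \<mu>/2 * (e t)^2" if t: "t \<in> {1..T}" for t
  proof -
    have "\<mu> / 2 * (norm (x t - xs t))\<^sup>2 \<le> f t (x t) - f t (xs t)"
      by (rule sc_min[where X=X and g="grad t"]) (use X xs_min[OF t] xX[OF t] sc[OF t] mu in auto)
    moreover have "e t = norm (x t - xs t)" unfolding e_def y_def using t by auto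
    ultimately show ?thesis by simp
  qed
  have db: "(norm (y t - y (t-1)))^2 \<le> (2+k) * ((e t)^2 + (m t)^2/k + (e (t-1))^2)" for t
  proof -
    have eq: "y t - y (t-1) = (y t - x t) + (x t - x (t-1)) + (x (t-1) - y (t-1))" by simp
    have "norm ((y t - x t) + (x t - x (t-1)) + (x (t-1) - y (t-1))) \<le> norm (y t - x t) + norm (x t - x (t-1)) + norm (x (t-1) - y (t-1))"
      by (rule order_trans[OF norm_triangle_ineq add_right_mono[OF norm_triangle_ineq]])
    then have "norm (y t - y (t-1)) \<le> norm (y t - x t) + norm (x t - x (t-1)) + norm (x (t-1) - y (t-1))"
      unfolding eq .
    then have le: "norm (y t - y (t-1)) \<le> e t + m t + e (t-1)"
      unfolding e_def m_def by (simp add: norm_minus_commute)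
    have "(norm (y t - y (t-1)))^2 \<le> (e t + m t + e (t-1))^2"
      using le by (intro power_mono) auto
    also have "\<dots> \<le> (2+k) * ((e t)^2 + (m t)^2/k + (e (t-1))^2)" by (rule cs3[OF k])
    finally show ?thesis .
  qed
  have ysum: "(\<Sum>t=2..T. (norm (xs t - xs (t - 1)))\<^sup>2) + (norm (xs 1))\<^sup>2
      = (\<Sum>t=1..T. (norm (y t - y (t - 1)))\<^sup>2)"
  proof -
    have "(\<Sum>t=1..T. (norm (y t - y (t - 1)))\<^sup>2) = (norm (y 1 - y 0))\<^sup>2 + (\<Sum>t=2..T. (norm (y t - y (t - 1)))\<^sup>2)"
      using T by (simp add: sum.atLeast_Suc_atMost numeral_2_eq_2)
    also have "(\<Sum>t=2..T. (norm (y t - y (t - 1)))\<^sup>2) = (\<Sum>t=2..T. (norm (xs t - xs (t - 1)))\<^sup>2)"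
      by (rule sum.cong) (auto simp: y_def)
    finally show ?thesis by (simp add: y_def)
  qed
  have eshift: "(\<Sum>t=1..T. (e (t-1))^2) \<le> (\<Sum>t=1..T. (e t)^2)"
  proof -
    have "(\<Sum>t=1..T. (e (t-1))^2) = (\<Sum>t=0..T-1. (e t)^2)"
      using T by (intro sum.reindex_bij_witness[where i="\<lambda>t. t+1" and j="\<lambda>t. t-1"]) auto
    also have "\<dots> = (\<Sum>t=1..T-1. (e t)^2)"
      using T e0 by (simp add: sum.atLeast_Suc_atMost)
    also have "\<dots> \<le> (\<Sum>t=1..T. (e t)^2)"
      by (intro sum_mono2) auto
    finally show ?thesis .
  qed
  have S: "(\<Sum>t=1..T. (norm (y t - y (t - 1)))\<^sup>2)
      \<le> (2+k) * (2 * (\<Sum>t=1..T. (e t)^2) + (\<Sum>t=1..T. (m t)^2) / k)"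
  proof -
    have "(\<Sum>t=1..T. (norm (y t - y (t - 1)))\<^sup>2) \<le> (\<Sum>t=1..T. (2+k) * ((e t)^2 + (m t)^2/k + (e (t-1))^2))"
      by (intro sum_mono db)
    also have "\<dots> = (2+k) * ((\<Sum>t=1..T. (e t)^2) + (\<Sum>t=1..T. (m t)^2) / k + (\<Sum>t=1..T. (e (t-1))^2))"
      by (simp add: sum_distrib_left sum.distrib sum_divide_distrib distrib_left)
    also have "\<dots> \<le> (2+k) * (2 * (\<Sum>t=1..T. (e t)^2) + (\<Sum>t=1..T. (m t)^2) / k)"
      using eshift k by (intro mult_left_mono) auto
    finally show ?thesis .
  qed
  have F: "(\<Sum>t=1..T. f t (x t)) \<ge> (\<Sum>t=1..T. f t (xs t)) + \<mu>/2 * (\<Sum>t=1..T. (e t)^2)"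
  proof -
    have "(\<Sum>t=1..T. f t (xs t) + \<mu>/2 * (e t)^2) \<le> (\<Sum>t=1..T. f t (x t))"
      using fb by (intro sum_mono) (simp add: algebra_simps)
    then show ?thesis by (simp add: sum.distrib sum_distrib_left)
  qed
  define E where "E = (\<Sum>t=1..T. (e t)^2)"
  define M where "M = (\<Sum>t=1..T. (m t)^2)"
  define Y where "Y = (\<Sum>t=1..T. (norm (y t - y (t - 1)))\<^sup>2)"
  have key: "\<mu> / (2 * (\<mu> + 4)) * Y \<le> \<mu>/2 * E + 1/2 * M"
  proof -
    have Yle: "Y \<le> (2+k) * (2*E + M/k)" using S unfolding Y_def E_def M_def .
    have c0: "\<mu> / (2 * (\<mu> + 4)) \<ge> 0" using mu by simp
    have "\<mu> / (2 * (\<mu> + 4)) * Y \<le> \<mu> / (2 * (\<mu> + 4)) * ((2+k) * (2*E + M/k))"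
      by (rule mult_left_mono[OF Yle c0])
    also have "\<dots> = \<mu>/2 * E + 1/2 * M"
    proof -
      have "(2+k) = (\<mu>+4)/2" unfolding k_def by simp
      then have "\<mu> / (2 * (\<mu> + 4)) * (2+k) = \<mu>/4" using mu by (simp add: field_simps)
      then have "\<mu> / (2 * (\<mu> + 4)) * ((2+k) * (2*E + M/k)) = \<mu>/4 * (2*E + M/k)"
        by (metis mult.assoc)
      also have "\<dots> = \<mu>/2 * E + 1/2 * M" unfolding k_def using mu by (simp add: field_simps)
      finally show ?thesis .
    qed
    finally show ?thesis .
  qed
  have "(\<Sum>t=1..T. f t (x t) + 1/2 * (norm (x t - x (t - 1)))\<^sup>2) = (\<Sum>t=1..T. f t (x t)) + 1/2 * M"
    unfolding M_def m_def by (simp add: sum.distrib sum_distrib_left)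
  note eqn = this
  show "(\<Sum>t=1..T. f t (xs t))
           + \<mu> / (2 * (\<mu> + 4)) * ((\<Sum>t=2..T. (norm (xs t - xs (t - 1)))\<^sup>2) + (norm (xs 1))\<^sup>2)
        \<le> (\<Sum>t=1..T. f t (x t) + 1/2 * (norm (x t - x (t - 1)))\<^sup>2)"
    unfolding ysum eqn using key F unfolding Y_def E_def by linarith
qed

end
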